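(* Let $f\in\mathcal H_0$, let $u$ solve the gradient flow $\partial_tu+\partial J(u)\ni0$, $u(0)=f$, and let $\Lambda(t):=pJ(u(t))/\|u(t)\|^p$ for $0<t<T_{\mathrm{ex}}$. Then $\Lambda'(t)\le0$ for almost all $t\in(0,T_{\mathrm{ex}})$. Furthermore, $\Lambda'(t)=0$ if and only if $u(t)$ is an eigenfunction with eigenvalue $\Lambda(t)$ and $\Lambda$ is differentiable at $t$.
   Context: $\mathcal H$ is a real Hilbert space with inner product $\langle\cdot,\cdot\rangle$ and norm $\|\cdot\|$; $p\ge1$. $J:\mathcal H\to\mathbb R\cup\{\infty\}$ is convex, lower semicontinuous, proper, with dense effective domain, and absolutely $p$-homogeneous: $J(cu)=|c|^pJ(u)$ for $c\ne0$ and $J(0)=0$. Standing coercivity assumption: $\lambda_1:=\inf_{u\in\mathcal H_0}pJ(u)/\|u\|^p>0$. $\partial J(u)=\{\zeta: J(u)+\langle\zeta,v-u\rangle\le J(v)\ \forall v\}$; $\mathcal N(J)=\{u:J(u)=0\}$; $\mathcal H_0:=\mathcal N(J)^\perp\setminus\{0\}$. The gradient flow solution (Brezis) is the unique continuous $u:[0,\infty)\to\mathcal H$, Lipschitz on $[\delta,\infty)$ for all $\delta>0$, right-differentiable on $(0,\infty)$ with $u(0)=f$ and $\partial_t^+u(t)=-\zeta(t)$, $\zeta(t)$ the minimal-norm element of $\partial J(u(t))$. $T_{\mathrm{ex}}:=\inf\{T>0:u(t)=0\ \forall t\ge T\}$. An eigenfunction with eigenvalue $\mu\in\mathbb R$ is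 any $v\ne0$ with $\mu\|v\|^{p-2}v\in\partial J(v)$. *)

theory Defs
  imports "HOL-Analysis.Analysis"
begin

definition convex_functional :: "('a::real_vector \<Rightarrow> ereal) \<Rightarrow> bool" where
  "convex_functional J \<longleftrightarrow>
     (\<forall>x y (t::real). 0 < t \<and> t < 1 \<longrightarrow>
        J ((1 - t) *\<^sub>R x + t *\<^sub>R y) \<le> ereal (1 - t) * J x + ereal t * J y)"

definition lsc_functional :: "('a::topological_space \<Rightarrow> ereal) \<Rightarrow> bool" where
  "lsc_functional J \<longleftrightarrow> (\<forall>c::ereal. closed {x. J x \<le> c})"

definition proper_functional :: "('a \<Rightarrow> ereal) \<Rightarrow> bool" where
  "proper_functional J \<longleftrightarrow> (\<forall>x. J x \<noteq> -\<infinity>) \<and> (\<exists>x. J x < \<infinity>)"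

definition eff_dom :: "('a \<Rightarrow> ereal) \<Rightarrow> 'a set" where
  "eff_dom J = {x. J x < \<infinity>}"

definition abs_p_homogeneous :: "real \<Rightarrow> ('a::real_vector \<Rightarrow> ereal) \<Rightarrow> bool" where
  "abs_p_homogeneous p J \<longleftrightarrow>
     J 0 = 0 \<and> (\<forall>(c::real) x. c \<noteq> 0 \<longrightarrow> J (c *\<^sub>R x) = ereal (\<bar>c\<bar> powr p) * J x)"

definition null_space :: "('a::real_vector \<Rightarrow> ereal) \<Rightarrow> 'a set" where
  "null_space J = {u. J u = 0}"

definition H0 :: "('a::real_inner \<Rightarrow> ereal) \<Rightarrow> 'a set" where
  "H0 J = {u. \<forall>v\<in>null_space J. inner u v = 0} - {0}"

definition lambda1 :: "real \<Rightarrow> ('a::real_inner \<Rightarrow> ereal) \<Rightarrow> ereal" where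
  "lambda1 p J = (INF u\<in>H0 J. ereal p * J u / ereal (norm u powr p))"

definition subdiff :: "('a::real_inner \<Rightarrow> ereal) \<Rightarrow> 'a \<Rightarrow> 'a set" where
  "subdiff J u = {\<zeta>. \<forall>v. J u + ereal (inner \<zeta> (v - u)) \<le> J v}"

definition min_norm_subgrad :: "('a::real_inner \<Rightarrow> ereal) \<Rightarrow> 'a \<Rightarrow> 'a \<Rightarrow> bool" where
  "min_norm_subgrad J u \<zeta> \<longleftrightarrow> \<zeta> \<in> subdiff J u \<and> (\<forall>\<eta>\<in>subdiff J u. norm \<zeta> \<le> norm \<eta>)"

definition gradient_flow :: "('a::real_inner \<Rightarrow> ereal) \<Rightarrow> 'a \<Rightarrow> (real \<Rightarrow> 'a) \<Rightarrow> bool" where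
  "gradient_flow J f u \<longleftrightarrow>
     continuous_on {0..} u \<and>
     (\<forall>\<delta>>0. \<exists>L. L-lipschitz_on {\<delta>..} u) \<and>
     u 0 = f \<and>
     (\<forall>t>0. \<exists>\<zeta>. min_norm_subgrad J (u t) \<zeta> \<and>
                 (u has_vector_derivative (- \<zeta>)) (at t within {t..}))"

text \<open>Extinction time (infinity if the solution never vanishes identically).\<close>
definition T_ex :: "(real \<Rightarrow> 'a::zero) \<Rightarrow> ereal" where
  "T_ex u = Inf (ereal ` {T. T > 0 \<and> (\<forall>t\<ge>T. u t = 0)})"

definition eigenfunction :: "real \<Rightarrow> ('a::real_inner \<Rightarrow> ereal) \<Rightarrow> 'a \<Rightarrow> real \<Rightarrow> bool" where
  "eigenfunction p J v \<mu> \<longleftrightarrow> v \<noteq> 0 \<and> (\<mu> * norm v powr (p - 2)) *\<^sub>R v \<in> subdiff J v"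

text \<open>Rayleigh quotient; J(u(t)) is finite for t > 0 along the flow.\<close>
definition rayleigh :: "real \<Rightarrow> ('a::real_normed_vector \<Rightarrow> ereal) \<Rightarrow> 'a \<Rightarrow> real" where
  "rayleigh p J v = p * real_of_ereal (J v) / norm v powr p"

end

theory Submission
  imports Defs
begin


lemma right_deriv_le:
  fixes f :: "real \<Rightarrow> real"
  assumes ab: "a \<le> b" and cont: "continuous_on {a..b} f"
    and der: "\<And>x. x \<in> {a..<b} \<Longrightarrow> \<exists>D. (f has_real_derivative D) (at x within {x..}) \<and> D \<le> M"
  shows "f b - f a \<le> M * (b - a)"
proof -
  have main: "f b - f a \<le> (M + e) * (b - a)" if e: "e > 0" for e
  proof -
    define g where "g y = f y - f a - (M + e) * (y - a)" for y
    define Z where "Z = {x\<in>{a..b}. g x \<le> 0}"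
    have gc: "continuous_on {a..b} g" unfolding g_def
      by (intro continuous_intros cont)
    have Zc: "closed Z" unfolding Z_def
      using continuous_closed_preimage[OF gc closed_atLeastAtMost closed_atMost[of 0]]
      by (simp add: vimage_def Int_def)
    have aZ: "a \<in> Z" using ab by (simp add: Z_def g_def)
    have Zb: "bdd_above Z" unfolding Z_def by (auto intro: bdd_aboveI[of _ b])
    define c where "c = Sup Z"
    have cZ: "c \<in> Z" unfolding c_def using closed_contains_Sup[OF _ Zb Zc] aZ by blast
    have "c = b"
    proof (rule ccontr)
      assume "c \<noteq> b"
      with cZ have cb: "a \<le> c" "c < b" by (auto simp: Z_def)
      then obtain D where D: "(f has_real_derivative D) (at c within {c..})" "D \<le> M"
        using der by auto
      have "(g has_real_derivative D - (M + e)) (at c within {c..})"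
        unfolding g_def by (auto intro!: derivative_eq_intros D(1))
      hence "((\<lambda>y. (g y - g c) / (y - c)) \<longlongrightarrow> D - (M + e)) (at_right c)"
        by (simp add: has_field_derivative_iff at_within_Ici_at_right)
      moreover have "D - (M + e) < 0" using D e by simp
      ultimately have ev: "eventually (\<lambda>y. (g y - g c) / (y - c) < 0) (at_right c)"
        by (rule order_tendstoD)
      have ev2: "eventually (\<lambda>y. y < b) (at_right c)"
        using order_tendstoD(2)[OF tendsto_ident_at cb(2)] .
      have "\<exists>y. ((g y - g c) / (y - c) < 0 \<and> y < b) \<and> c < y"
        using eventually_happens'[OF _ eventually_conj[OF eventually_conj[OF ev ev2] eventually_at_right_less]]
        by simp
      then obtain y where y: "(g y - g c) / (y - c) < 0" "y < b" "c < y" by blast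
      hence "g y < g c" by (simp add: divide_less_0_iff)
      with cZ have "y \<in> Z" using y cb by (auto simp: Z_def)
      hence "y \<le> c" unfolding c_def by (rule cSup_upper[OF _ Zb])
      with y show False by simp
    qed
    with cZ show ?thesis by (simp add: Z_def g_def)
  qed
  show ?thesis
  proof (rule field_le_epsilon)
    fix e :: real assume "e > 0"
    have "f b - f a \<le> (M + e / (b - a + 1)) * (b - a)"
      using main[of "e / (b - a + 1)"] \<open>e > 0\<close> ab by simp
    also have "\<dots> = M * (b - a) + e * ((b - a) / (b - a + 1))" using ab
      by (simp add: field_simps)
    also have "\<dots> \<le> M * (b - a) + e * 1"
      using ab \<open>e > 0\<close> by (intro add_left_mono mult_left_mono) auto
    finally show "f b - f a \<le> M * (b - a) + e" by simp
  qed
qed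

lemma right_deriv_ge:
  fixes f :: "real \<Rightarrow> real"
  assumes ab: "a \<le> b" and cont: "continuous_on {a..b} f"
    and der: "\<And>x. x \<in> {a..<b} \<Longrightarrow> \<exists>D. (f has_real_derivative D) (at x within {x..}) \<and> D \<ge> m"
  shows "f b - f a \<ge> m * (b - a)"
proof -
  have "(\<lambda>x. - f x) b - (\<lambda>x. - f x) a \<le> (- m) * (b - a)"
  proof (rule right_deriv_le[OF ab])
    show "continuous_on {a..b} (\<lambda>x. - f x)" by (intro continuous_intros cont)
    fix x assume "x \<in> {a..<b}"
    then obtain D where "(f has_real_derivative D) (at x within {x..})" "D \<ge> m" using der by blast
    then show "\<exists>D. ((\<lambda>x. - f x) has_real_derivative D) (at x within {x..}) \<and> D \<le> - m"
      by (intro exI[of _ "-D"]) (auto intro!: derivative_eq_intros)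
  qed
  then show ?thesis by simp
qed

lemma deriv_from_right:
  fixes f g :: "real \<Rightarrow> real"
  assumes d: "d > 0"
    and cont: "continuous_on {t-d<..<t+d} f"
    and der: "\<And>x. x \<in> {t-d<..<t+d} \<Longrightarrow> (f has_real_derivative g x) (at x within {x..})"
    and gc: "isCont g t"
  shows "(f has_real_derivative g t) (at t)"
  unfolding has_field_derivative_iff
proof (rule LIM_I)
  fix r :: real assume r: "r > 0"
  obtain s where s: "s > 0" "\<And>x. norm (x - t) < s \<Longrightarrow> norm (g x - g t) < r / 2"
    using gc r unfolding isCont_def LIM_eq by (metis half_gt_zero dist_norm dist_self order_le_less)
  define s' where "s' = min s d"
  have s': "s' > 0" "s' \<le> s" "s' \<le> d" using s d by (auto simp: s'_def)
  show "\<exists>s>0. \<forall>x. x \<noteq> t \<and> norm (x - t) < s \<longrightarrow> norm ((f x - f t) / (x - t) - g t) < r"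
  proof (intro exI[of _ s'] conjI allI impI)
    show "s' > 0" by fact
    fix x assume x: "x \<noteq> t \<and> norm (x - t) < s'"
    have gb: "g y \<le> g t + r/2" "g y \<ge> g t - r/2" if "y \<in> {min x t..max x t}" for y
    proof -
      have "norm (y - t) < s" using that x s' by (auto simp: abs_if split: if_splits)
      then have "norm (g y - g t) < r/2" by (rule s(2))
      then show "g y \<le> g t + r/2" "g y \<ge> g t - r/2" by (auto simp: abs_if split: if_splits)
    qed
    have sub: "{min x t..max x t} \<subseteq> {t-d<..<t+d}" using x s' by (auto simp: abs_if split: if_splits)
    have cc: "continuous_on {min x t..max x t} f" using continuous_on_subset[OF cont sub] .
    have up: "f (max x t) - f (min x t) \<le> (g t + r/2) * (max x t - min x t)"
    proof (rule right_deriv_le[OF _ cc])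
      show "min x t \<le> max x t" by simp
      fix y assume y: "y \<in> {min x t..<max x t}"
      then have y1: "y \<in> {min x t..max x t}" by auto
      then have y2: "y \<in> {t-d<..<t+d}" using sub by blast
      show "\<exists>D. (f has_real_derivative D) (at y within {y..}) \<and> D \<le> g t + r/2"
        by (intro exI[of _ "g y"] conjI der[OF y2] gb[OF y1])
    qed
    have lo: "f (max x t) - f (min x t) \<ge> (g t - r/2) * (max x t - min x t)"
    proof (rule right_deriv_ge[OF _ cc])
      show "min x t \<le> max x t" by simp
      fix y assume y: "y \<in> {min x t..<max x t}"
      then have y1: "y \<in> {min x t..max x t}" by auto
      then have y2: "y \<in> {t-d<..<t+d}" using sub by blast
      show "\<exists>D. (f has_real_derivative D) (at y within {y..}) \<and> D \<ge> g t - r/2"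
        by (intro exI[of _ "g y"] conjI der[OF y2] gb[OF y1])
    qed
    have q: "(f x - f t) / (x - t) = (f (max x t) - f (min x t)) / (max x t - min x t)"
      using x by (cases "x < t") (auto simp: field_simps max_def min_def)
    have pos: "max x t - min x t > 0" using x by (auto simp: max_def min_def)
    have "(f (max x t) - f (min x t)) / (max x t - min x t) \<le> g t + r/2"
      using up pos by (simp add: divide_le_eq)
    moreover have "(f (max x t) - f (min x t)) / (max x t - min x t) \<ge> g t - r/2"
      using lo pos by (simp add: le_divide_eq)
    ultimately show "norm ((f x - f t) / (x - t) - g t) < r" unfolding q real_norm_def abs_less_iff using r by linarith
  qed
qed

lemma vderiv_quotient:
  fixes f :: "real \<Rightarrow> 'a::real_normed_vector"
  assumes "(f has_vector_derivative f') (at x within S)"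
  shows "((\<lambda>y. (f y - f x) /\<^sub>R (y - x)) \<longlongrightarrow> f') (at x within S)"
proof -
  have "((\<lambda>y. (f y - f x - (y - x) *\<^sub>R f') /\<^sub>R norm (y - x)) \<longlongrightarrow> 0) (at x within S)"
    using assms unfolding has_vector_derivative_def has_derivative_within
    by (simp add: algebra_simps divide_inverse_commute scaleR_conv_of_real)
  hence "((\<lambda>y. norm ((f y - f x - (y - x) *\<^sub>R f') /\<^sub>R norm (y - x))) \<longlongrightarrow> 0) (at x within S)"
    by (rule tendsto_norm_zero)
  moreover have "eventually (\<lambda>y. norm ((f y - f x) /\<^sub>R (y - x) - f') = norm ((f y - f x - (y - x) *\<^sub>R f') /\<^sub>R norm (y - x))) (at x within S)"
  unfolding eventually_at_filter
  proof -
    show "eventually (\<lambda>y. y \<noteq> x \<longrightarrow> y \<in> S \<longrightarrow> norm ((f y - f x) /\<^sub>R (y - x) - f') = norm ((f y - f x - (y - x) *\<^sub>R f') /\<^sub>R norm (y - x))) (nhds x)"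
    proof (intro always_eventually allI impI)
      fix y assume "y \<noteq> x" "y \<in> S"
      then have "(f y - f x) /\<^sub>R (y - x) - f' = (f y - f x - (y - x) *\<^sub>R f') /\<^sub>R (y - x)"
        by (simp add: scaleR_diff_right)
      then show "norm ((f y - f x) /\<^sub>R (y - x) - f') = norm ((f y - f x - (y - x) *\<^sub>R f') /\<^sub>R norm (y - x))"
        by simp
    qed
  qed
  ultimately have "((\<lambda>y. norm ((f y - f x) /\<^sub>R (y - x) - f')) \<longlongrightarrow> 0) (at x within S)"
    using tendsto_cong by (rule_tac iffD2[OF tendsto_cong]) auto
  then have L: "((\<lambda>y. (f y - f x) /\<^sub>R (y - x) - f') \<longlongrightarrow> 0) (at x within S)"
    by (rule tendsto_norm_zero_cancel)
  show ?thesis by (subst Lim_null) (simp add: L)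
qed




locale gflow =
  fixes J :: "'a::{real_inner,complete_space} \<Rightarrow> ereal" and p :: real and u :: "real \<Rightarrow> 'a"
  assumes p: "p \<ge> 1" and conv: "convex_functional J" and proper: "proper_functional J"
    and hom: "abs_p_homogeneous p J"
    and ucont: "continuous_on {0..} u"
    and uder: "\<And>t. t > 0 \<Longrightarrow> \<exists>\<zeta>. min_norm_subgrad J (u t) \<zeta> \<and> (u has_vector_derivative (- \<zeta>)) (at t within {t..})"
begin

lemma J_hom: "c \<noteq> 0 \<Longrightarrow> J (c *\<^sub>R x) = ereal (\<bar>c\<bar> powr p) * J x"
  using hom unfolding abs_p_homogeneous_def by (elim conjE allE[of _ c] allE[of _ x]) simp

lemma J_zero: "J 0 = 0"
  using hom unfolding abs_p_homogeneous_def by simp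

lemma J_minus: "J (- x) = J x"
  using J_hom[of "-1" x] by simp

lemma J_not_minf: "J x \<noteq> - \<infinity>" using proper unfolding proper_functional_def by blast

lemma J_nonneg: "J x \<ge> 0"
proof -
  have "J ((1 - 1/2) *\<^sub>R x + (1/2) *\<^sub>R (- x)) \<le> ereal (1 - 1/2) * J x + ereal (1/2) * J (- x)"
    using conv unfolding convex_functional_def
    by (erule_tac allE[of _ x], erule_tac allE[of _ "-x"], erule_tac allE[of _ "1/2"]) simp
  moreover have "J 0 = 0" by (rule J_zero)
  ultimately have "0 \<le> ereal (1/2) * J x + ereal (1/2) * J x" by (simp add: J_minus)
  then show ?thesis using J_not_minf[of x] by (cases "J x") auto
qed

lemma subdiff_finite:
  assumes "\<zeta> \<in> subdiff J x" shows "J x = ereal (real_of_ereal (J x))"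
proof -
  obtain y where y: "J y < \<infinity>" using proper unfolding proper_functional_def by blast
  have "J x + ereal (inner \<zeta> (y - x)) \<le> J y" using assms unfolding subdiff_def by blast
  then have "J x \<noteq> \<infinity>" using y by auto
  then show ?thesis using J_not_minf[of x] by (cases "J x") auto
qed

lemma subgrad_real:
  assumes "\<zeta> \<in> subdiff J x" shows "ereal (real_of_ereal (J x) + inner \<zeta> (v - x)) \<le> J v"
proof -
  have "J x + ereal (inner \<zeta> (v - x)) \<le> J v" using assms unfolding subdiff_def by blast
  then show ?thesis using subdiff_finite[OF assms] by (metis plus_ereal.simps(1))
qed

lemma euler:
  assumes "\<zeta> \<in> subdiff J x" shows "inner \<zeta> x = p * real_of_ereal (J x)"
proof -
  define r where "r = real_of_ereal (J x)"
  define k where "k = inner \<zeta> x"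
  define \<phi> where "\<phi> c = c powr p * r - (c - 1) * k" for c :: real
  have ineq: "\<phi> 1 \<le> \<phi> c" if c: "c > 0" for c
  proof -
    have "J (c *\<^sub>R x) = ereal (\<bar>c\<bar> powr p) * J x" using J_hom c by simp
    also have "\<dots> = ereal (c powr p * r)" using c subdiff_finite[OF assms] unfolding r_def
      by (metis abs_of_pos times_ereal.simps(1))
    finally have "ereal (r + inner \<zeta> (c *\<^sub>R x - x)) \<le> ereal (c powr p * r)"
      using subgrad_real[OF assms, of "c *\<^sub>R x"] unfolding r_def by simp
    then have "r + (c - 1) * k \<le> c powr p * r"
      by (simp add: k_def inner_diff_right algebra_simps)
    then show ?thesis by (simp add: \<phi>_def)
  qed
  have "(\<phi> has_real_derivative (p * 1 powr (p - 1) * r - (1 * k))) (at 1)"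
    unfolding \<phi>_def
    by (intro derivative_eq_intros has_real_derivative_powr[THEN DERIV_chain2] | simp)+
  then have "p * 1 powr (p - 1) * r - (1 * k) = 0"
    by (rule DERIV_local_min[of _ _ 1 1]) (use ineq in auto)
  then show ?thesis by (simp add: r_def k_def)
qed

definition z :: "real \<Rightarrow> 'a" where
  "z t = (SOME \<zeta>. min_norm_subgrad J (u t) \<zeta> \<and> (u has_vector_derivative (- \<zeta>)) (at t within {t..}))"

definition a :: "real \<Rightarrow> real" where "a t = real_of_ereal (J (u t))"

lemma zprop: assumes "t > 0"
  shows "min_norm_subgrad J (u t) (z t)" "(u has_vector_derivative (- z t)) (at t within {t..})"
  using someI_ex[OF uder[OF assms]] unfolding z_def by blast+

lemma z_sub: "t > 0 \<Longrightarrow> z t \<in> subdiff J (u t)"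
  using zprop(1) unfolding min_norm_subgrad_def by blast

lemma z_min: "t > 0 \<Longrightarrow> \<eta> \<in> subdiff J (u t) \<Longrightarrow> norm (z t) \<le> norm \<eta>"
  using zprop(1) unfolding min_norm_subgrad_def by blast

lemma Ja: "t > 0 \<Longrightarrow> J (u t) = ereal (a t)"
  using subdiff_finite[OF z_sub] unfolding a_def by blast

lemma subg: "t > 0 \<Longrightarrow> ereal (a t + inner (z t) (v - u t)) \<le> J v"
  using subgrad_real[OF z_sub] unfolding a_def by blast

lemma a_sub: "s > 0 \<Longrightarrow> t > 0 \<Longrightarrow> a s \<ge> a t + inner (z t) (u s - u t)"
  using subg[of t "u s"] Ja[of s] by simp

lemma mono_z: "s > 0 \<Longrightarrow> t > 0 \<Longrightarrow> inner (z s - z t) (u s - u t) \<ge> 0"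
  using a_sub[of s t] a_sub[of t s] by (simp add: inner_diff_left inner_diff_right inner_commute)

lemma euler_t: "t > 0 \<Longrightarrow> inner (z t) (u t) = p * a t"
  using euler[OF z_sub] unfolding a_def .

lemma a_nonneg: "a t \<ge> 0"
  unfolding a_def using J_nonneg[of "u t"] by (simp add: real_of_ereal_pos)

end



lemma vderiv_inner_self:
  fixes w :: "real \<Rightarrow> 'a::real_inner"
  assumes "(w has_vector_derivative w') (at x within S)"
  shows "((\<lambda>\<tau>. inner (w \<tau>) (w \<tau>)) has_real_derivative 2 * inner (w x) w') (at x within S)"
proof -
  have "((\<lambda>\<tau>. inner (w \<tau>) (w \<tau>)) has_derivative (\<lambda>h. inner (w x) (h *\<^sub>R w') + inner (h *\<^sub>R w') (w x))) (at x within S)"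
    using assms unfolding has_vector_derivative_def by (intro has_derivative_inner) auto
  then show ?thesis unfolding has_field_derivative_def
    by (rule has_derivative_eq_rhs) (auto simp: fun_eq_iff inner_commute algebra_simps)
qed

lemma parallelogram:
  fixes x y :: "'a::real_inner"
  shows "(norm (x - y))\<^sup>2 = 2 * (norm x)\<^sup>2 + 2 * (norm y)\<^sup>2 - 4 * (norm ((1/2) *\<^sub>R (x + y)))\<^sup>2"
  by (simp add: power2_norm_eq_inner inner_add_left inner_add_right inner_diff_left inner_diff_right
      inner_commute algebra_simps)

context gflow begin

lemma u_isCont: "t > 0 \<Longrightarrow> isCont u t"
  using continuous_on_interior[OF ucont, of t] by simp

lemma shift_deriv:
  assumes "\<tau> > 0" "h \<ge> 0"
  shows "((\<lambda>s. u (s + h)) has_vector_derivative (- z (\<tau> + h))) (at \<tau> within {\<tau>..})"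
proof -
  have img: "(\<lambda>s. s + h) ` {\<tau>..} = {\<tau> + h..}"
  proof (rule set_eqI, rule iffI)
    fix y assume "y \<in> {\<tau> + h..}" then show "y \<in> (\<lambda>s. s + h) ` {\<tau>..}"
      by (intro image_eqI[of _ _ "y - h"]) auto
  qed auto
  have d1: "((\<lambda>s. s + h) has_vector_derivative 1) (at \<tau> within {\<tau>..})"
    by (auto intro!: derivative_eq_intros simp: has_real_derivative_iff_has_vector_derivative[symmetric])
  have "(u \<circ> (\<lambda>s. s + h) has_vector_derivative 1 *\<^sub>R (- z (\<tau> + h))) (at \<tau> within {\<tau>..})"
    by (rule vector_diff_chain_within[OF d1]) (use zprop(2)[of "\<tau> + h"] assms img in simp)
  then show ?thesis by (simp add: o_def)
qed

lemma incr_mono: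
  assumes h: "h > 0" and s: "0 < s" "s \<le> t"
  shows "norm (u (t + h) - u t) \<le> norm (u (s + h) - u s)"
proof -
  define g where "g \<tau> = inner (u (\<tau> + h) - u \<tau>) (u (\<tau> + h) - u \<tau>)" for \<tau>
  have c1: "continuous_on {s..t} u" using continuous_on_subset[OF ucont] s by auto
  have c2: "continuous_on {s..t} (\<lambda>x. u (x + h))"
      using continuous_on_compose2[OF ucont, of "{s..t}" "\<lambda>x. x + h"] s h
        continuous_on_add[OF continuous_on_id continuous_on_const, of "{s..t}" h]
      by auto
  have gc: "continuous_on {s..t} g" unfolding g_def by (intro continuous_intros c1 c2)
  have "g t - g s \<le> 0 * (t - s)"
  proof (rule right_deriv_le[OF s(2) gc])
    fix \<tau> assume \<tau>: "\<tau> \<in> {s..<t}"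
    then have \<tau>0: "\<tau> > 0" using s by auto
    have "((\<lambda>x. u (x + h) - u x) has_vector_derivative (- z (\<tau> + h) - (- z \<tau>))) (at \<tau> within {\<tau>..})"
      using shift_deriv[OF \<tau>0, of h] shift_deriv[OF \<tau>0, of 0] h
      by (intro derivative_intros) auto
    from vderiv_inner_self[OF this]
    have "(g has_real_derivative 2 * inner (u (\<tau> + h) - u \<tau>) (- z (\<tau> + h) - (- z \<tau>))) (at \<tau> within {\<tau>..})"
      unfolding g_def .
    moreover have "2 * inner (u (\<tau> + h) - u \<tau>) (- z (\<tau> + h) - (- z \<tau>)) \<le> 0"
      using mono_z[of "\<tau> + h" \<tau>] \<tau>0 h
      by (simp add: inner_commute inner_diff_left inner_diff_right algebra_simps)
    ultimately show "\<exists>D. (g has_real_derivative D) (at \<tau> within {\<tau>..}) \<and> D \<le> 0" by blast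
  qed
  then have "g t \<le> g s" by simp
  then show ?thesis unfolding g_def
    by (simp add: power2_norm_eq_inner[symmetric])
qed

lemma quot_norm:
  assumes t: "t > 0"
  shows "((\<lambda>h. norm (u (h + t) - u t) / h) \<longlongrightarrow> norm (z t)) (at_right 0)"
proof -
  have "((\<lambda>y. (u y - u t) /\<^sub>R (y - t)) \<longlongrightarrow> - z t) (at_right t)"
    using vderiv_quotient[OF zprop(2)[OF t]] by (simp add: at_within_Ici_at_right)
  then have "((\<lambda>h. (u (h + t) - u t) /\<^sub>R h) \<longlongrightarrow> - z t) (at_right 0)"
    unfolding filterlim_at_right_to_0[of _ _ t] by simp
  then have "((\<lambda>h. norm ((u (h + t) - u t) /\<^sub>R h)) \<longlongrightarrow> norm (- z t)) (at_right 0)"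
    by (rule tendsto_norm)
  moreover have "eventually (\<lambda>h. norm ((u (h + t) - u t) /\<^sub>R h) = norm (u (h + t) - u t) / h) (at_right 0)"
    using eventually_at_right_less[of 0] by eventually_elim (simp add: divide_inverse_commute)
  ultimately show ?thesis using tendsto_cong by (rule_tac iffD1[OF tendsto_cong]) auto
qed

lemma N_mono:
  assumes "0 < s" "s \<le> t"
  shows "norm (z t) \<le> norm (z s)"
proof (rule tendsto_le[OF trivial_limit_at_right_real quot_norm quot_norm])
  show "0 < s" "0 < t" using assms by auto
  show "eventually (\<lambda>h. norm (u (h + t) - u t) / h \<le> norm (u (h + s) - u s) / h) (at_right 0)"
    using eventually_at_right_less[of 0]
  proof eventually_elim
    case (elim h)
    then show ?case using incr_mono[of h s t] assms by (simp add: add.commute divide_right_mono)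
  qed
qed

lemma a_lip:
  assumes "0 < d" "d \<le> s" "d \<le> t"
  shows "\<bar>a s - a t\<bar> \<le> norm (z d) * norm (u s - u t)"
proof -
  have s0: "s > 0" "t > 0" using assms by auto
  have "a s - a t \<le> inner (z s) (u s - u t)"
    using a_sub[of t s] s0 by (simp add: inner_diff_right)
  also have "\<dots> \<le> norm (z s) * norm (u s - u t)" by (rule norm_cauchy_schwarz)
  also have "\<dots> \<le> norm (z d) * norm (u s - u t)"
    using N_mono[of d s] assms by (simp add: mult_right_mono)
  finally have 1: "a s - a t \<le> norm (z d) * norm (u s - u t)" .
  have "a t - a s \<le> inner (z t) (u t - u s)"
    using a_sub[of s t] s0 by (simp add: inner_diff_right)
  also have "\<dots> \<le> norm (z t) * norm (u t - u s)" by (rule norm_cauchy_schwarz)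
  also have "\<dots> \<le> norm (z d) * norm (u s - u t)"
    using N_mono[of d t] assms by (simp add: mult_right_mono norm_minus_commute)
  finally show ?thesis using 1 by linarith
qed

lemma a_isCont:
  assumes t: "t > 0" shows "isCont a t"
proof -
  have "((\<lambda>s. a s - a t) \<longlongrightarrow> 0) (at t)"
  proof (rule Lim_null_comparison)
    have "eventually (\<lambda>s. s > t/2) (at t)"
      using t by (intro order_tendstoD(1)[OF tendsto_ident_at]) auto
    then show "eventually (\<lambda>s. norm (a s - a t) \<le> norm (z (t/2)) * norm (u s - u t)) (at t)"
      by eventually_elim (use a_lip[of "t/2"] t in auto)
    have U: "((\<lambda>s. u s - u t) \<longlongrightarrow> 0) (at t)"
      using u_isCont[OF t] unfolding isCont_def by (rule Lim_null[THEN iffD1])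
    show "((\<lambda>s. norm (z (t/2)) * norm (u s - u t)) \<longlongrightarrow> 0) (at t)"
      using tendsto_mult[OF tendsto_const tendsto_norm_zero[OF U], of "norm (z (t/2))"] by simp
  qed
  then show ?thesis unfolding isCont_def by (rule Lim_null[THEN iffD2])
qed

end



context gflow begin

definition E :: "'a \<Rightarrow> real \<Rightarrow> 'a set" where
  "E x e = {\<xi>. \<forall>v. ereal (real_of_ereal (J x) + inner \<xi> (v - x) - e) \<le> J v}"

lemma E_mono: "e \<le> e' \<Longrightarrow> E x e \<subseteq> E x e'"
  unfolding E_def by (auto intro: order_trans[rotated])

lemma E_mid:
  assumes "\<xi>1 \<in> E x e" "\<xi>2 \<in> E x e" shows "(1/2) *\<^sub>R (\<xi>1 + \<xi>2) \<in> E x e"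
  unfolding E_def
proof (intro CollectI allI)
  fix v
  show "ereal (real_of_ereal (J x) + inner ((1/2) *\<^sub>R (\<xi>1 + \<xi>2)) (v - x) - e) \<le> J v"
  proof (cases "J v")
    case (real c)
    have "ereal (real_of_ereal (J x) + inner \<xi>1 (v - x) - e) \<le> J v"
         "ereal (real_of_ereal (J x) + inner \<xi>2 (v - x) - e) \<le> J v"
      using assms unfolding E_def by auto
    then have c1: "real_of_ereal (J x) + inner \<xi>1 (v - x) - e \<le> c" and c2: "real_of_ereal (J x) + inner \<xi>2 (v - x) - e \<le> c"
      using real by auto
    have eq: "inner ((1/2) *\<^sub>R (\<xi>1 + \<xi>2)) (v - x) = (inner \<xi>1 (v - x) + inner \<xi>2 (v - x)) / 2"
      by (simp add: inner_add_left)
    have "real_of_ereal (J x) + inner ((1/2) *\<^sub>R (\<xi>1 + \<xi>2)) (v - x) - e \<le> c"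
      unfolding eq using c1 c2 by argo
    then show ?thesis using real by simp
  qed (use J_not_minf[of v] in auto)
qed

lemma epsK:
  assumes mn: "min_norm_subgrad J x \<zeta>0" and rho: "\<rho> < norm \<zeta>0"
  shows "\<exists>e>0. \<forall>\<xi>\<in>E x e. \<rho> \<le> norm \<xi>"
proof (rule ccontr)
  assume "\<not> ?thesis"
  then have ex: "\<exists>\<xi>\<in>E x e. norm \<xi> < \<rho>" if "e > 0" for e using that by (auto simp: not_le)
  define ee where "ee k = inverse (real (Suc k))" for k
  have ee_pos: "ee k > 0" for k by (simp add: ee_def)
  have ee_mono: "k \<le> l \<Longrightarrow> ee l \<le> ee k" for k l
    by (simp add: ee_def le_imp_inverse_le)
  define m where "m k = Inf (norm ` E x (ee k))" for k
  have ne: "E x (ee k) \<noteq> {}" for k using ex[OF ee_pos[of k]] by auto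
  have bb: "bdd_below (norm ` E x (ee k))" for k by (rule bdd_belowI[of _ 0]) auto
  have m_low: "m k \<le> norm \<xi>" if "\<xi> \<in> E x (ee k)" for k \<xi>
    unfolding m_def using that bb by (intro cInf_lower) auto
  have m_nn: "0 \<le> m k" for k
    unfolding m_def using ne by (intro cInf_greatest) auto
  have m_rho: "m k < \<rho>" for k
  proof -
    obtain \<xi> where "\<xi> \<in> E x (ee k)" "norm \<xi> < \<rho>" using ex[OF ee_pos[of k]] by blast
    then show ?thesis using m_low[of \<xi> k] by simp
  qed
  have m_inc: "incseq m"
  proof (rule incseq_SucI)
    fix k
    have "E x (ee (Suc k)) \<subseteq> E x (ee k)" by (rule E_mono) (simp add: ee_mono)
    then show "m k \<le> m (Suc k)" unfolding m_def
      using ne[of "Suc k"] bb[of k] by (intro cInf_superset_mono) auto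
  qed
  define M where "M = Sup (range m)"
  have bdd: "bdd_above (range m)" using m_rho by (intro bdd_aboveI[of _ \<rho>]) (auto intro: less_imp_le)
  have mM: "m \<longlonglongrightarrow> M" unfolding M_def by (rule LIMSEQ_incseq_SUP[OF bdd m_inc])
  have m_le_M: "m k \<le> M" for k unfolding M_def using bdd by (intro cSUP_upper) auto
  have M_rho: "M \<le> \<rho>" unfolding M_def using m_rho by (intro cSUP_least) (auto intro: less_imp_le)
  have "\<forall>k. \<exists>\<xi>. \<xi> \<in> E x (ee k) \<and> norm \<xi> < m k + ee k"
  proof
    fix k
    have "Inf (norm ` E x (ee k)) < m k + ee k" using ee_pos[of k] by (simp add: m_def)
    then show "\<exists>\<xi>. \<xi> \<in> E x (ee k) \<and> norm \<xi> < m k + ee k"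
      using cInf_less_iff[of "norm ` E x (ee k)"] ne[of k] bb[of k] by auto
  qed
  then obtain \<eta> where \<eta>: "\<And>k. \<eta> k \<in> E x (ee k)" "\<And>k. norm (\<eta> k) < m k + ee k" by metis
  have ee_lim: "ee \<longlonglongrightarrow> 0" unfolding ee_def by (rule LIMSEQ_inverse_real_of_nat)
  have "Cauchy \<eta>"
  proof (rule CauchyI)
    fix \<epsilon> :: real assume \<epsilon>: "\<epsilon> > 0"
    have "(\<lambda>n. 4 * ((M + ee n)\<^sup>2 - (m n)\<^sup>2)) \<longlonglongrightarrow> 4 * ((M + 0)\<^sup>2 - M\<^sup>2)"
      by (intro tendsto_intros ee_lim mM)
    then have "eventually (\<lambda>n. 4 * ((M + ee n)\<^sup>2 - (m n)\<^sup>2) < \<epsilon>\<^sup>2) sequentially"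
      using \<epsilon> by (intro order_tendstoD(2)) auto
    then obtain n where n: "4 * ((M + ee n)\<^sup>2 - (m n)\<^sup>2) < \<epsilon>\<^sup>2"
      by (auto simp: eventually_sequentially)
    show "\<exists>n. \<forall>k\<ge>n. \<forall>l\<ge>n. norm (\<eta> k - \<eta> l) < \<epsilon>"
    proof (intro exI[of _ n] allI impI)
      fix k l assume kl: "n \<le> k" "n \<le> l"
      have "\<eta> k \<in> E x (ee n)" "\<eta> l \<in> E x (ee n)"
        using \<eta>(1) E_mono[OF ee_mono[OF kl(1)]] E_mono[OF ee_mono[OF kl(2)]] by blast+
      then have "(1/2) *\<^sub>R (\<eta> k + \<eta> l) \<in> E x (ee n)" by (rule E_mid)
      then have mid: "m n \<le> norm ((1/2) *\<^sub>R (\<eta> k + \<eta> l))" by (rule m_low)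
      have nk: "norm (\<eta> k) \<le> M + ee n"
        using \<eta>(2)[of k] m_le_M[of k] ee_mono[OF kl(1)] by linarith
      have nl: "norm (\<eta> l) \<le> M + ee n"
        using \<eta>(2)[of l] m_le_M[of l] ee_mono[OF kl(2)] by linarith
      have "(norm (\<eta> k - \<eta> l))\<^sup>2 = 2 * (norm (\<eta> k))\<^sup>2 + 2 * (norm (\<eta> l))\<^sup>2 - 4 * (norm ((1/2) *\<^sub>R (\<eta> k + \<eta> l)))\<^sup>2"
        by (rule parallelogram)
      also have "\<dots> \<le> 2 * (M + ee n)\<^sup>2 + 2 * (M + ee n)\<^sup>2 - 4 * (m n)\<^sup>2"
        using nk nl mid m_nn[of n]
        by (intro diff_mono add_mono mult_left_mono power_mono) auto
      also have "\<dots> = 4 * ((M + ee n)\<^sup>2 - (m n)\<^sup>2)" by simp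
      also have "\<dots> < \<epsilon>\<^sup>2" by (rule n)
      finally show "norm (\<eta> k - \<eta> l) < \<epsilon>"
        using \<epsilon> by (metis abs_norm_cancel power2_less_imp_less less_le_not_le norm_ge_zero)
    qed
  qed
  then obtain \<eta>0 where lim: "\<eta> \<longlonglongrightarrow> \<eta>0" using Cauchy_convergent_iff convergent_def by blast
  have sub: "\<eta>0 \<in> subdiff J x"
    unfolding subdiff_def
  proof (intro CollectI allI)
    fix v
    show "J x + ereal (inner \<eta>0 (v - x)) \<le> J v"
    proof (cases "J v")
      case (real c)
      have "\<forall>k. real_of_ereal (J x) + inner (\<eta> k) (v - x) - ee k \<le> c"
      proof
        fix k
        from \<eta>(1)[of k] have "ereal (real_of_ereal (J x) + inner (\<eta> k) (v - x) - ee k) \<le> J v"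
          unfolding E_def by blast
        then show "real_of_ereal (J x) + inner (\<eta> k) (v - x) - ee k \<le> c" using real by simp
      qed
      moreover have "(\<lambda>k. real_of_ereal (J x) + inner (\<eta> k) (v - x) - ee k) \<longlonglongrightarrow> real_of_ereal (J x) + inner \<eta>0 (v - x) - 0"
        by (intro tendsto_intros lim ee_lim)
      ultimately have "real_of_ereal (J x) + inner \<eta>0 (v - x) \<le> c"
        using LIMSEQ_le_const2[of _ "real_of_ereal (J x) + inner \<eta>0 (v - x) - 0" c] by auto
      moreover have "J x = ereal (real_of_ereal (J x))"
        using mn subdiff_finite unfolding min_norm_subgrad_def by blast
      ultimately show ?thesis using real by (metis ereal_less_eq(3) plus_ereal.simps(1))
    qed (use J_not_minf[of v] in auto)
  qed
  have "(\<lambda>k. norm (\<eta> k)) \<longlonglongrightarrow> norm \<eta>0" by (intro tendsto_intros lim)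
  moreover have "(\<lambda>k. M + ee k) \<longlonglongrightarrow> M + 0" by (intro tendsto_intros ee_lim)
  moreover have "\<forall>k. norm (\<eta> k) \<le> M + ee k" using \<eta>(2) m_le_M by (metis add_le_cancel_right less_imp_le order_trans)
  ultimately have "norm \<eta>0 \<le> M + 0" by (intro LIMSEQ_le) auto
  moreover have "norm \<zeta>0 \<le> norm \<eta>0" using mn sub unfolding min_norm_subgrad_def by blast
  ultimately show False using M_rho rho by simp
qed

lemma z_rcont:
  assumes t: "t > 0" shows "(z \<longlongrightarrow> z t) (at_right t)"
proof (rule tendstoI)
  fix \<epsilon> :: real assume \<epsilon>: "\<epsilon> > 0"
  define N where "N = norm (z t)"
  have Nle: "eventually (\<lambda>s. norm (z s) \<le> N) (at_right t)"
    using eventually_at_right_less[of t] by eventually_elim (use N_mono t in \<open>auto simp: N_def\<close>)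
  show "eventually (\<lambda>s. dist (z s) (z t) < \<epsilon>) (at_right t)"
  proof (cases "N = 0")
    case True
    show ?thesis using Nle by eventually_elim (use True \<epsilon> in \<open>auto simp: N_def\<close>)
  next
    case False
    then have N0: "N > 0" by (simp add: N_def)
    define \<rho> where "\<rho> = max (N/2) (N - \<epsilon>\<^sup>2 / (16 * N))"
    have \<rho>: "\<rho> < N" "0 \<le> \<rho>" "N - \<rho> \<le> \<epsilon>\<^sup>2 / (16 * N)" using N0 \<epsilon> by (auto simp: \<rho>_def)
    obtain e where e: "e > 0" "\<And>\<xi>. \<xi> \<in> E (u t) e \<Longrightarrow> \<rho> \<le> norm \<xi>"
      using epsK[OF zprop(1)[OF t], of \<rho>] \<rho> by (auto simp: N_def)
    have "(u \<longlongrightarrow> u t) (at_right t)"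
      using u_isCont[OF t] by (simp add: isCont_def filterlim_at_split)
    then have "eventually (\<lambda>s. dist (u s) (u t) < e / (2 * N)) (at_right t)"
      using e N0 by (intro tendstoD) auto
    then show ?thesis using Nle eventually_at_right_less[of t]
    proof eventually_elim
      case (elim s)
      then have s0: "s > 0" "t < s" and us: "norm (u s - u t) < e / (2 * N)" and ns: "norm (z s) \<le> N"
        using t by (auto simp: dist_norm)
      have zsE: "z s \<in> E (u t) e" unfolding E_def
      proof (intro CollectI allI)
        fix v
        have "\<bar>inner (z t) (u s - u t)\<bar> \<le> N * norm (u s - u t)"
          unfolding N_def by (rule Cauchy_Schwarz_ineq2)
        then have 1: "a s \<ge> a t - N * norm (u s - u t)"
          using a_sub[of s t] s0 t by (simp add: abs_le_iff)
        have 2: "inner (z s) (v - u s) \<ge> inner (z s) (v - u t) - N * norm (u s - u t)"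
        proof -
          have "inner (z s) (v - u s) = inner (z s) (v - u t) - inner (z s) (u s - u t)"
            by (simp add: inner_diff_right)
          moreover have "inner (z s) (u s - u t) \<le> N * norm (u s - u t)"
            using norm_cauchy_schwarz[of "z s" "u s - u t"] ns
            by (meson mult_right_mono norm_ge_zero order_trans)
          ultimately show ?thesis by simp
        qed
        have 3: "2 * N * norm (u s - u t) < e" using us N0 by (simp add: field_simps)
        have "real_of_ereal (J (u t)) + inner (z s) (v - u t) - e \<le> a s + inner (z s) (v - u s)"
          using 1 2 3 unfolding a_def by linarith
        then have "ereal (real_of_ereal (J (u t)) + inner (z s) (v - u t) - e) \<le> ereal (a s + inner (z s) (v - u s))"
          by simp
        also have "\<dots> \<le> J v" by (rule subg[OF s0(1)])
        finally show "ereal (real_of_ereal (J (u t)) + inner (z s) (v - u t) - e) \<le> J v" .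
      qed
      have ztE: "z t \<in> E (u t) e" unfolding E_def
      proof (intro CollectI allI)
        fix v
        have "ereal (real_of_ereal (J (u t)) + inner (z t) (v - u t) - e) \<le> ereal (a t + inner (z t) (v - u t))"
          using e unfolding a_def by simp
        also have "\<dots> \<le> J v" by (rule subg[OF t])
        finally show "ereal (real_of_ereal (J (u t)) + inner (z t) (v - u t) - e) \<le> J v" .
      qed
      have mid: "\<rho> \<le> norm ((1/2) *\<^sub>R (z s + z t))" using e(2)[OF E_mid[OF zsE ztE]] .
      have "(norm (z s - z t))\<^sup>2 = 2 * (norm (z s))\<^sup>2 + 2 * (norm (z t))\<^sup>2 - 4 * (norm ((1/2) *\<^sub>R (z s + z t)))\<^sup>2"
        by (rule parallelogram)
      also have "\<dots> \<le> 2 * N\<^sup>2 + 2 * N\<^sup>2 - 4 * \<rho>\<^sup>2"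
        using ns mid \<rho>(2) by (intro diff_mono add_mono mult_left_mono power_mono) (auto simp: N_def)
      also have "\<dots> = 4 * (N - \<rho>) * (N + \<rho>)" by (simp add: algebra_simps power2_eq_square)
      also have "\<dots> \<le> 4 * (\<epsilon>\<^sup>2 / (16 * N)) * (2 * N)"
        using \<rho> N0 by (intro mult_mono) auto
      also have "\<dots> = \<epsilon>\<^sup>2 / 2" using N0 by (simp add: field_simps)
      also have "\<dots> < \<epsilon>\<^sup>2" using \<epsilon> by simp
      finally have "(norm (z s - z t))\<^sup>2 < \<epsilon>\<^sup>2" .
      then show "dist (z s) (z t) < \<epsilon>"
        using \<epsilon> by (simp add: dist_norm power2_less_imp_less)
    qed
  qed
qed

lemma a_rderiv:
  assumes t: "t > 0"
  shows "(a has_real_derivative - (norm (z t))\<^sup>2) (at t within {t..})"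
  unfolding has_field_derivative_iff at_within_Ici_at_right
proof (rule tendsto_sandwich)
  define d where "d s = (u s - u t) /\<^sub>R (s - t)" for s
  have dlim: "(d \<longlongrightarrow> - z t) (at_right t)"
    unfolding d_def using vderiv_quotient[OF zprop(2)[OF t]] by (simp add: at_within_Ici_at_right)
  show "eventually (\<lambda>s. inner (z t) (d s) \<le> (a s - a t) / (s - t)) (at_right t)"
    using eventually_at_right_less[of t]
  proof eventually_elim
    case (elim s)
    then have "a s - a t \<ge> inner (z t) (u s - u t)" using a_sub[of s t] t by simp
    moreover have "inner (z t) (d s) = inner (z t) (u s - u t) / (s - t)"
      by (simp add: d_def divide_inverse mult.commute)
    ultimately show ?case using divide_right_mono[of "inner (z t) (u s - u t)" "a s - a t" "s - t"] elim by simp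
  qed
  show "eventually (\<lambda>s. (a s - a t) / (s - t) \<le> inner (z s) (d s)) (at_right t)"
    using eventually_at_right_less[of t]
  proof eventually_elim
    case (elim s)
    then have "a s - a t \<le> inner (z s) (u s - u t)" using a_sub[of t s] t by (simp add: inner_diff_right)
    moreover have "inner (z s) (d s) = inner (z s) (u s - u t) / (s - t)"
      by (simp add: d_def divide_inverse mult.commute)
    ultimately show ?case using divide_right_mono[of "a s - a t" "inner (z s) (u s - u t)" "s - t"] elim by simp
  qed
  show "((\<lambda>s. inner (z t) (d s)) \<longlongrightarrow> - (norm (z t))\<^sup>2) (at_right t)"
    using tendsto_inner[OF tendsto_const dlim, of "z t"] by (simp add: power2_norm_eq_inner)
  show "((\<lambda>s. inner (z s) (d s)) \<longlongrightarrow> - (norm (z t))\<^sup>2) (at_right t)"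
    using tendsto_inner[OF z_rcont[OF t] dlim] by (simp add: power2_norm_eq_inner)
qed

end



context gflow begin

definition q :: "real \<Rightarrow> real" where "q s = inner (u s) (u s)"
definition B :: "real \<Rightarrow> real" where "B s = q s powr (p/2)"
definition Lam :: "real \<Rightarrow> real" where "Lam s = p * a s / B s"
definition RD :: "real \<Rightarrow> real" where
  "RD s = (p * (- (norm (z s))\<^sup>2) * B s - p * a s * ((p/2) * q s powr (p/2 - 1) * (2 * (- p * a s)))) / (B s * B s)"

lemma q_pos: "u t \<noteq> 0 \<Longrightarrow> q t > 0" by (simp add: q_def)

lemma q_rderiv: assumes t: "t > 0" shows "(q has_real_derivative 2 * (- p * a t)) (at t within {t..})"
proof -
  have "2 * inner (u t) (- z t) = 2 * (- p * a t)" using euler_t[OF t] by (simp add: inner_commute)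
  then show ?thesis using vderiv_inner_self[OF zprop(2)[OF t]] unfolding q_def by simp
qed

lemma B_rderiv:
  assumes "t > 0" "u t \<noteq> 0"
  shows "(B has_real_derivative (p/2) * q t powr (p/2 - 1) * (2 * (- p * a t))) (at t within {t..})"
  unfolding B_def
  using DERIV_chain2[OF has_real_derivative_powr[OF q_pos[OF assms(2)], of "p/2"] q_rderiv[OF assms(1)]] .

lemma B_pos: "u t \<noteq> 0 \<Longrightarrow> B t > 0" using q_pos[of t] by (simp add: B_def)

lemma Lam_rderiv:
  assumes "t > 0" "u t \<noteq> 0"
  shows "(Lam has_real_derivative RD t) (at t within {t..})"
proof -
  have "((\<lambda>s. p * a s) has_real_derivative p * (- (norm (z t))\<^sup>2)) (at t within {t..})"
    by (rule DERIV_cmult[OF a_rderiv[OF assms(1)]])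
  from DERIV_divide[OF this B_rderiv[OF assms]] B_pos[OF assms(2)]
  show ?thesis unfolding Lam_def[abs_def] RD_def by simp
qed

lemma RD_form:
  assumes "t > 0" "u t \<noteq> 0"
  shows "RD t = p * q t powr (p/2 - 1) * ((p * a t)\<^sup>2 - (norm (z t))\<^sup>2 * q t) / (B t * B t)"
proof -
  have "B t = q t powr ((p/2 - 1) + 1)" unfolding B_def by simp
  also have "\<dots> = q t powr (p/2 - 1) * q t powr 1" by (rule powr_add)
  also have "\<dots> = q t powr (p/2 - 1) * q t" using q_pos[OF assms(2)] by simp
  finally have "B t = q t powr (p/2 - 1) * q t" .
  then show ?thesis unfolding RD_def by (simp add: algebra_simps power2_eq_square)
qed

lemma CS_t: "t > 0 \<Longrightarrow> (p * a t)\<^sup>2 \<le> (norm (z t))\<^sup>2 * q t"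
proof -
  assume t: "t > 0"
  have "\<bar>inner (z t) (u t)\<bar> \<le> norm (z t) * norm (u t)" by (rule Cauchy_Schwarz_ineq2)
  then have "(inner (z t) (u t))\<^sup>2 \<le> (norm (z t) * norm (u t))\<^sup>2"
    by (metis abs_ge_zero power2_abs power_mono)
  then show ?thesis using euler_t[OF t] unfolding q_def
    by (simp add: power_mult_distrib power2_norm_eq_inner)
qed

lemma RD_le: assumes "t > 0" "u t \<noteq> 0" shows "RD t \<le> 0"
proof -
  have "p * q t powr (p/2 - 1) \<ge> 0" using p by simp
  moreover have "(p * a t)\<^sup>2 - (norm (z t))\<^sup>2 * q t \<le> 0" using CS_t[OF assms(1)] by simp
  ultimately have "p * q t powr (p/2 - 1) * ((p * a t)\<^sup>2 - (norm (z t))\<^sup>2 * q t) \<le> 0"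
    by (simp add: mult_nonneg_nonpos)
  then show ?thesis unfolding RD_form[OF assms] using B_pos[OF assms(2)]
    by (simp add: divide_nonpos_pos)
qed

lemma RD_zero_iff:
  assumes "t > 0" "u t \<noteq> 0"
  shows "RD t = 0 \<longleftrightarrow> \<bar>inner (z t) (u t)\<bar> = norm (z t) * norm (u t)"
proof -
  have ne: "p * q t powr (p/2 - 1) \<noteq> 0" "B t * B t \<noteq> 0"
    using p q_pos[OF assms(2)] B_pos[OF assms(2)] by auto
  have "RD t = 0 \<longleftrightarrow> (p * a t)\<^sup>2 = (norm (z t))\<^sup>2 * q t"
    unfolding RD_form[OF assms] using ne by simp
  also have "\<dots> \<longleftrightarrow> (\<bar>inner (z t) (u t)\<bar>)\<^sup>2 = (norm (z t) * norm (u t))\<^sup>2"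
    using euler_t[OF assms(1)] unfolding q_def by (simp add: power_mult_distrib power2_norm_eq_inner)
  also have "\<dots> \<longleftrightarrow> \<bar>inner (z t) (u t)\<bar> = norm (z t) * norm (u t)"
    by (rule power2_eq_iff_nonneg) auto
  finally show ?thesis .
qed

lemma eigen_iff:
  assumes t: "t > 0" and nz: "u t \<noteq> 0"
  shows "eigenfunction p J (u t) (rayleigh p J (u t)) \<longleftrightarrow> \<bar>inner (z t) (u t)\<bar> = norm (z t) * norm (u t)"
proof -
  define n where "n = norm (u t)"
  have n0: "n > 0" using nz by (simp add: n_def)
  define c where "c = rayleigh p J (u t) * norm (u t) powr (p - 2)"
  have c: "c = p * a t / n\<^sup>2"
  proof -
    have "norm (u t) powr (p - 2) = n powr p / n\<^sup>2"
      using n0 by (simp add: n_def powr_diff powr_realpow)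
    then show ?thesis unfolding c_def rayleigh_def a_def n_def using n0
      by (simp add: n_def field_simps)
  qed
  have eu: "inner (z t) (u t) = p * a t" by (rule euler_t[OF t])
  show ?thesis
  proof
    assume "eigenfunction p J (u t) (rayleigh p J (u t))"
    then have sub: "c *\<^sub>R u t \<in> subdiff J (u t)" unfolding eigenfunction_def c_def by blast
    have "norm (z t) \<le> norm (c *\<^sub>R u t)" by (rule z_min[OF t sub])
    also have "\<dots> = \<bar>p * a t\<bar> / n" using n0 by (simp add: c n_def abs_mult power2_eq_square)
    finally have "norm (z t) * n \<le> \<bar>p * a t\<bar>" using n0 by (simp add: le_divide_eq)
    moreover have "\<bar>inner (z t) (u t)\<bar> \<le> norm (z t) * n" unfolding n_def by (rule Cauchy_Schwarz_ineq2)
    ultimately show "\<bar>inner (z t) (u t)\<bar> = norm (z t) * norm (u t)" using eu by (simp add: n_def)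
  next
    assume "\<bar>inner (z t) (u t)\<bar> = norm (z t) * norm (u t)"
    then have "norm (z t) *\<^sub>R u t = norm (u t) *\<^sub>R z t \<or> norm (z t) *\<^sub>R u t = - norm (u t) *\<^sub>R z t"
      by (simp add: norm_cauchy_schwarz_abs_eq)
    then obtain c' where zc: "z t = c' *\<^sub>R u t"
    proof (elim disjE)
      assume h: "norm (z t) *\<^sub>R u t = norm (u t) *\<^sub>R z t"
      have "z t = (1 / n) *\<^sub>R (norm (u t) *\<^sub>R z t)" using n0 by (simp add: n_def)
      also have "\<dots> = (norm (z t) / n) *\<^sub>R u t" by (simp add: h[symmetric])
      finally show ?thesis by (rule that)
    next
      assume h: "norm (z t) *\<^sub>R u t = - norm (u t) *\<^sub>R z t"
      have "z t = (- 1 / n) *\<^sub>R (- norm (u t) *\<^sub>R z t)" using n0 by (simp add: n_def)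
      also have "\<dots> = (- 1 / n) *\<^sub>R (norm (z t) *\<^sub>R u t)" by (simp only: h)
      also have "\<dots> = (- norm (z t) / n) *\<^sub>R u t" by simp
      finally show ?thesis by (rule that)
    qed
    have "c' * n\<^sup>2 = p * a t" using eu unfolding zc n_def by (simp add: power2_norm_eq_inner)
    then have "c' = c" using n0 by (simp add: c field_simps)
    then have "c *\<^sub>R u t \<in> subdiff J (u t)" using z_sub[OF t] zc by simp
    then show "eigenfunction p J (u t) (rayleigh p J (u t))"
      unfolding eigenfunction_def c_def using nz by simp
  qed
qed

lemma stays0:
  assumes s: "s > 0" "u s = 0" "s \<le> s'"
  shows "u s' = 0"
proof -
  have qc: "continuous_on {s..s'} q" unfolding q_def
    using continuous_on_subset[OF ucont, of "{s..s'}"] s by (auto intro!: continuous_intros)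
  have "q s' - q s \<le> 0 * (s' - s)"
  proof (rule right_deriv_le[OF s(3) qc])
    fix \<tau> assume "\<tau> \<in> {s..<s'}"
    then have \<tau>: "\<tau> > 0" using s by auto
    have "2 * (- p * a \<tau>) \<le> 0" using p a_nonneg[of \<tau>] by simp
    then show "\<exists>D. (q has_real_derivative D) (at \<tau> within {\<tau>..}) \<and> D \<le> 0"
      using q_rderiv[OF \<tau>] by blast
  qed
  then have "inner (u s') (u s') \<le> 0" using s by (simp add: q_def)
  then show ?thesis using inner_gt_zero_iff[of "u s'"] by linarith
qed

lemma Lam_eq: "rayleigh p J (u s) = Lam s"
proof (cases "u s = 0")
  case True then show ?thesis by (simp add: rayleigh_def Lam_def B_def q_def)
next
  case False
  then have n0: "norm (u s) > 0" by simp
  have "q s = norm (u s) powr 2" unfolding q_def power2_norm_eq_inner[symmetric]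
    using powr_numeral[of "norm (u s)" "num.Bit0 num.One"] by simp
  then have "q s powr (p/2) = norm (u s) powr (2 * (p/2))" by (simp only: powr_powr)
  then have "q s powr (p/2) = norm (u s) powr p" by simp
  then show ?thesis by (simp add: rayleigh_def Lam_def B_def a_def)
qed

lemma Lam_isCont: "s > 0 \<Longrightarrow> u s \<noteq> 0 \<Longrightarrow> isCont Lam s"
  unfolding Lam_def[abs_def] B_def[abs_def] q_def[abs_def]
  using a_isCont[of s] u_isCont[of s] by (auto intro!: continuous_intros)

lemma RD_isCont: "s > 0 \<Longrightarrow> u s \<noteq> 0 \<Longrightarrow> isCont (\<lambda>x. norm (z x)) s \<Longrightarrow> isCont RD s"
  unfolding RD_def[abs_def] B_def[abs_def] q_def[abs_def]
  using a_isCont[of s] u_isCont[of s] by (auto intro!: continuous_intros)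

end



lemma rderiv_unique:
  fixes f :: "real \<Rightarrow> real"
  assumes "(f has_real_derivative D) (at t)" "(f has_real_derivative D') (at t within {t..})"
  shows "D = D'"
proof -
  have "(f has_real_derivative D) (at t within {t..})" using assms(1) by (rule has_field_derivative_at_within)
  then have "((\<lambda>y. (f y - f t) / (y - t)) \<longlongrightarrow> D) (at_right t)"
    "((\<lambda>y. (f y - f t) / (y - t)) \<longlongrightarrow> D') (at_right t)"
    using assms(2) by (simp_all add: has_field_derivative_iff at_within_Ici_at_right)
  then show ?thesis using tendsto_unique[OF trivial_limit_at_right_real] by blast
qed

theorem proposition4:
  fixes J :: "'a::{real_inner, complete_space} \<Rightarrow> ereal"
    and p :: real and f :: 'a and u :: "real \<Rightarrow> 'a"
  assumes p: "p \<ge> 1"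
    and conv: "convex_functional J"
    and lsc: "lsc_functional J"
    and proper: "proper_functional J"
    and dense: "closure (eff_dom J) = UNIV"
    and hom: "abs_p_homogeneous p J"
    and coercive: "lambda1 p J > 0"
    and f: "f \<in> H0 J"
    and flow: "gradient_flow J f u"
  shows "(AE t in lborel. 0 < t \<and> ereal t < T_ex u \<longrightarrow>
            (\<exists>D. ((\<lambda>s. rayleigh p J (u s)) has_real_derivative D) (at t) \<and> D \<le> 0))
       \<and> (\<forall>t. 0 < t \<and> ereal t < T_ex u \<longrightarrow>
            ((((\<lambda>s. rayleigh p J (u s)) has_real_derivative 0) (at t))
             \<longleftrightarrow> (eigenfunction p J (u t) (rayleigh p J (u t))
                  \<and> (\<lambda>s. rayleigh p J (u s)) differentiable (at t))))"
proof -
  have ucont: "continuous_on {0..} u"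
    and uder: "\<And>t. t > 0 \<Longrightarrow> \<exists>\<zeta>. min_norm_subgrad J (u t) \<zeta> \<and> (u has_vector_derivative (- \<zeta>)) (at t within {t..})"
    using flow unfolding gradient_flow_def by auto
  interpret G: gflow J p u
    using p conv proper hom ucont uder by unfold_locales auto
  have nz: "u t \<noteq> 0" if t: "0 < t" "ereal t < T_ex u" for t
  proof
    assume "u t = 0"
    then have "\<forall>s\<ge>t. u s = 0" using G.stays0[OF t(1)] by blast
    then have "T_ex u \<le> ereal t" unfolding T_ex_def using t(1) by (intro Inf_lower) auto
    with t(2) show False by simp
  qed
  have rl: "(\<lambda>s. rayleigh p J (u s)) = G.Lam" by (rule ext) (rule G.Lam_eq)
  have nbhd: "\<exists>d>0. \<forall>s\<in>{t-d<..<t+d}. s > 0 \<and> u s \<noteq> 0" if t: "0 < t" "ereal t < T_ex u" for t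
  proof -
    have ut: "norm (u t) > 0" using nz[OF t] by simp
    obtain r where r: "r > 0" "\<And>x. x \<noteq> t \<and> norm (x - t) < r \<Longrightarrow> norm (u x - u t) < norm (u t)"
      using G.u_isCont[OF t(1)] ut unfolding isCont_def LIM_eq by blast
    show ?thesis
    proof (intro exI[of _ "min r t"] conjI ballI)
      show "min r t > 0" using r t by simp
      fix s assume s: "s \<in> {t - min r t<..<t + min r t}"
      then show "s > 0" by auto
      show "u s \<noteq> 0"
      proof (cases "s = t")
        case True then show ?thesis using nz[OF t] by simp
      next
        case False
        then have "norm (u s - u t) < norm (u t)" using s by (intro r(2)) (auto simp: abs_if)
        then show ?thesis by auto
      qed
    qed
  qed
  have deriv: "(G.Lam has_real_derivative G.RD t) (at t)"
    if t: "0 < t" "ereal t < T_ex u" and c: "isCont (\<lambda>x. norm (G.z x)) t" for t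
  proof -
    obtain d where d: "d > 0" "\<And>s. s \<in> {t-d<..<t+d} \<Longrightarrow> s > 0 \<and> u s \<noteq> 0"
      using nbhd[OF t] by blast
    show ?thesis
    proof (rule deriv_from_right[OF d(1)])
      show "continuous_on {t-d<..<t+d} G.Lam"
        using d(2) by (intro continuous_at_imp_continuous_on ballI G.Lam_isCont) auto
      show "\<And>x. x \<in> {t-d<..<t+d} \<Longrightarrow> (G.Lam has_real_derivative G.RD x) (at x within {x..})"
        using d(2) by (intro G.Lam_rderiv) auto
      show "isCont G.RD t" using G.RD_isCont[OF t(1) nz[OF t] c] .
    qed
  qed
  define C where "C = {s\<in>{0<..}. \<not> isCont (\<lambda>s. - norm (G.z s)) s}"
  have "mono_on {0<..} (\<lambda>s. - norm (G.z s))"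
    by (rule mono_onI) (use G.N_mono in auto)
  then have cC: "countable C" unfolding C_def
    by (rule mono_on_ctble_discont_open[OF open_greaterThan])
  have part1: "AE t in lborel. 0 < t \<and> ereal t < T_ex u \<longrightarrow>
            (\<exists>D. ((\<lambda>s. rayleigh p J (u s)) has_real_derivative D) (at t) \<and> D \<le> 0)"
    using AE_not_in[OF countable_imp_null_set_lborel[OF cC]]
  proof (rule eventually_mono)
    fix t assume tC: "t \<notin> C"
    show "0 < t \<and> ereal t < T_ex u \<longrightarrow>
            (\<exists>D. ((\<lambda>s. rayleigh p J (u s)) has_real_derivative D) (at t) \<and> D \<le> 0)"
    proof
      assume t: "0 < t \<and> ereal t < T_ex u"
      then have "isCont (\<lambda>s. - norm (G.z s)) t" using tC by (auto simp: C_def)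
      then have "isCont (\<lambda>s. - (- norm (G.z s))) t" by (rule isCont_minus)
      then have c: "isCont (\<lambda>s. norm (G.z s)) t" by simp
      show "\<exists>D. ((\<lambda>s. rayleigh p J (u s)) has_real_derivative D) (at t) \<and> D \<le> 0"
        unfolding rl using deriv[OF _ _ c] G.RD_le[of t] nz[of t] t by blast
    qed
  qed
  have part2: "((((\<lambda>s. rayleigh p J (u s)) has_real_derivative 0) (at t))
             \<longleftrightarrow> (eigenfunction p J (u t) (rayleigh p J (u t))
                  \<and> (\<lambda>s. rayleigh p J (u s)) differentiable (at t)))"
    if t: "0 < t" "ereal t < T_ex u" for t
  proof -
    have rd: "(G.Lam has_real_derivative G.RD t) (at t within {t..})"
      by (rule G.Lam_rderiv[OF t(1) nz[OF t]])
    have ei: "eigenfunction p J (u t) (rayleigh p J (u t)) \<longleftrightarrow> G.RD t = 0"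
      using G.eigen_iff[OF t(1) nz[OF t]] G.RD_zero_iff[OF t(1) nz[OF t]] by simp
    show ?thesis unfolding rl ei
    proof
      assume d0: "(G.Lam has_real_derivative 0) (at t)"
      then have "0 = G.RD t" by (rule rderiv_unique[OF _ rd])
      moreover have "G.Lam differentiable (at t)" using d0 unfolding real_differentiable_def by blast
      ultimately show "G.RD t = 0 \<and> G.Lam differentiable (at t)" by simp
    next
      assume h: "G.RD t = 0 \<and> G.Lam differentiable (at t)"
      then obtain D where D: "(G.Lam has_real_derivative D) (at t)" unfolding real_differentiable_def by blast
      then have "D = G.RD t" by (rule rderiv_unique[OF _ rd])
      then show "(G.Lam has_real_derivative 0) (at t)" using D h by simp
    qed
  qed
  show ?thesis using part1 part2 by blast
qed


end
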